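(* Let $K\subseteq \mathbb{R}^k$ be compact and let $f:\mathbb{R}^k\to\mathbb{R}$ be $f(x)=d(x,K)$. Let $\epsilon\geq 0$ and $\delta>0$ be such that $2\delta+\epsilon<1$. Let $x\in\mathbb{R}^k$ and $r$ with $0<r<d(x,K)$, and suppose there are $z_1,z_2\in K$ with $d(x,z_1)\leq d(x,K)+\epsilon r$ and $d(x,z_2)\leq d(x,K)+\epsilon r$. Suppose that $f$ is $\delta$-coarsely differentiable on $B(x,r)$. Let $\theta$ be the angle between $[x,z_1]$ and $[x,z_2]$. Then $$|\theta|\leq \cos^{-1}\left(2\left(\frac{1-(2\delta+\epsilon)}{1+2\delta}\right)^2-1\right).$$
   Context: $d(p,q)=|p-q|$ is the Euclidean distance, $d(p,K)=\inf\{d(p,x):x\in K\}$, and $B(x,r)$ is the closed Euclidean ball of radius $r$ centered at $x$. A function $f:\mathbb{R}^k\to\mathbb{R}$ is $\delta$-coarsely differentiable on $B(x,r)$ if there is an affine function $\lambda:\mathbb{R}^k\to\mathbb{R}$ such that $|f(p)-\lambda(p)|\leq \delta r$ for all $p\in B(x,r)$. *)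

theory Defs
  imports "HOL-Analysis.Analysis"
begin

definition vec_angle :: "'a::euclidean_space \<Rightarrow> 'a \<Rightarrow> real" where
  "vec_angle u v = arccos ((u \<bullet> v) / (norm u * norm v))"

definition coarsely_differentiable_on ::
  "real \<Rightarrow> ('a::euclidean_space \<Rightarrow> real) \<Rightarrow> 'a \<Rightarrow> real \<Rightarrow> bool" where
  "coarsely_differentiable_on \<delta> f x r \<longleftrightarrow>
     (\<exists>a b. \<forall>p \<in> cball x r. \<bar>f p - (a \<bullet> p + b)\<bar> \<le> \<delta> * r)"

end

theory Submission
  imports Defs
begin

lemma dir_bound:
  fixes K :: "'a::euclidean_space set" and a x z :: 'a
  assumes "\<forall>p \<in> cball x r. \<bar>infdist p K - (a \<bullet> p + b)\<bar> \<le> \<delta> * r"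
    and "0 < r" and "r < infdist x K" and "z \<in> K"
    and "dist x z \<le> infdist x K + \<epsilon> * r"
  shows "a \<bullet> ((1 / norm (z - x)) *\<^sub>R (z - x)) \<le> -(1 - (2 * \<delta> + \<epsilon>))"
proof -
  define d where "d = norm (z - x)"
  define u where "u = (1 / d) *\<^sub>R (z - x)"
  have dD: "infdist x K \<le> d" using infdist_le[OF assms(4), of x] by (simp add: d_def dist_norm norm_minus_commute)
  have dpos: "d > 0" using dD assms by linarith
  have nu: "norm u = 1" using dpos by (simp add: u_def d_def)
  have "x + r *\<^sub>R u \<in> cball x r" using nu assms(2) by (simp add: dist_norm)
  hence h1: "\<bar>infdist (x + r *\<^sub>R u) K - (a \<bullet> (x + r *\<^sub>R u) + b)\<bar> \<le> \<delta> * r" using assms(1) by blast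
  have "x \<in> cball x r" using assms(2) by simp
  hence h2: "\<bar>infdist x K - (a \<bullet> x + b)\<bar> \<le> \<delta> * r" using assms(1) by blast
  have za: "z - (x + r *\<^sub>R u) = (1 - r / d) *\<^sub>R (z - x)"
    by (simp add: u_def algebra_simps)
  have zb: "(d - r) *\<^sub>R u = (1 - r / d) *\<^sub>R (z - x)"
    using dpos by (simp add: u_def field_simps)
  have zeq: "z - (x + r *\<^sub>R u) = (d - r) *\<^sub>R u" using za zb by simp
  have "infdist (x + r *\<^sub>R u) K \<le> dist (x + r *\<^sub>R u) z" using infdist_le[OF assms(4)] .
  also have "\<dots> = d - r" using zeq nu dD assms by (simp add: dist_norm norm_minus_commute)
  finally have h3: "infdist (x + r *\<^sub>R u) K \<le> d - r" .
  have h4: "d \<le> infdist x K + \<epsilon> * r" using assms(5) by (simp add: d_def dist_norm norm_minus_commute)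
  have "a \<bullet> (x + r *\<^sub>R u) = a \<bullet> x + r * (a \<bullet> u)" by (simp add: inner_add_right)
  hence "r * (a \<bullet> u) \<le> r * (-(1 - (2 * \<delta> + \<epsilon>)))" using h1 h2 h3 h4 by (simp add: abs_le_iff algebra_simps)
  hence "a \<bullet> u \<le> -(1 - (2 * \<delta> + \<epsilon>))" using assms(2) by simp
  thus ?thesis by (simp add: u_def d_def)
qed

lemma norm_bound:
  fixes K :: "'a::euclidean_space set" and a x :: 'a
  assumes "\<forall>p \<in> cball x r. \<bar>infdist p K - (a \<bullet> p + b)\<bar> \<le> \<delta> * r"
    and "0 < r"
  shows "norm a \<le> 1 + 2 * \<delta>"
proof (cases "a = 0")
  case True
  have "x \<in> cball x r" using assms(2) by simp
  hence "\<bar>infdist x K - (a \<bullet> x + b)\<bar> \<le> \<delta> * r" using assms(1) by blast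
  hence "0 \<le> \<delta>" using assms(2) by (meson abs_ge_zero order_trans zero_le_mult_iff not_le)
  thus ?thesis using True by simp
next
  case False
  define p where "p = x - (r / norm a) *\<^sub>R a"
  have "p \<in> cball x r" using False assms(2) by (simp add: p_def dist_norm)
  hence h1: "\<bar>infdist p K - (a \<bullet> p + b)\<bar> \<le> \<delta> * r" using assms(1) by blast
  have "x \<in> cball x r" using assms(2) by simp
  hence h2: "\<bar>infdist x K - (a \<bullet> x + b)\<bar> \<le> \<delta> * r" using assms(1) by blast
  have h3: "infdist x K \<le> infdist p K + dist x p" by (rule infdist_triangle)
  have "dist x p = r" using False assms(2) by (simp add: p_def dist_norm)
  have "a \<bullet> p = a \<bullet> x - r * norm a" using False
    by (simp add: p_def inner_diff_right power2_norm_eq_inner[symmetric] power2_eq_square)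
  hence "r * norm a \<le> r * (1 + 2 * \<delta>)" using h1 h2 h3 \<open>dist x p = r\<close>
    by (simp add: abs_le_iff algebra_simps)
  thus ?thesis using assms(2) by simp
qed

theorem theorem3p1:
  fixes K :: "'a::euclidean_space set" and f :: "'a \<Rightarrow> real"
    and \<epsilon> \<delta> r :: real and x z1 z2 :: 'a
  assumes "compact K"
    and "f = (\<lambda>y. infdist y K)"
    and "\<epsilon> \<ge> 0" and "\<delta> > 0" and "2 * \<delta> + \<epsilon> < 1"
    and "0 < r" and "r < infdist x K"
    and "z1 \<in> K" and "z2 \<in> K"
    and "dist x z1 \<le> infdist x K + \<epsilon> * r"
    and "dist x z2 \<le> infdist x K + \<epsilon> * r"
    and "coarsely_differentiable_on \<delta> f x r"
  shows "\<bar>vec_angle (z1 - x) (z2 - x)\<bar>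
           \<le> arccos (2 * ((1 - (2 * \<delta> + \<epsilon>)) / (1 + 2 * \<delta>))\<^sup>2 - 1)"
proof -
  obtain a b where ab: "\<forall>p \<in> cball x r. \<bar>infdist p K - (a \<bullet> p + b)\<bar> \<le> \<delta> * r"
    using assms(2,12) unfolding coarsely_differentiable_on_def by auto
  define c where "c = 1 - (2 * \<delta> + \<epsilon>)"
  define s where "s = c / (1 + 2 * \<delta>)"
  define u1 where "u1 = (1 / norm (z1 - x)) *\<^sub>R (z1 - x)"
  define u2 where "u2 = (1 / norm (z2 - x)) *\<^sub>R (z2 - x)"
  have c1: "a \<bullet> u1 \<le> - c" unfolding u1_def c_def by (rule dir_bound[OF ab assms(6,7,8,10)])
  have c2: "a \<bullet> u2 \<le> - c" unfolding u2_def c_def by (rule dir_bound[OF ab assms(6,7,9,11)])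
  have na: "norm a \<le> 1 + 2 * \<delta>" by (rule norm_bound[OF ab assms(6)])
  have cpos: "c > 0" using assms(5) by (simp add: c_def)
  have n1: "norm (z1 - x) > 0" using infdist_le[OF assms(8), of x] assms(6,7) by (cases "x = z1") (auto simp add: dist_norm norm_minus_commute)
  have n2: "norm (z2 - x) > 0" using infdist_le[OF assms(9), of x] assms(6,7) by (cases "x = z2") (auto simp add: dist_norm norm_minus_commute)
  have nu1: "norm u1 = 1" using n1 by (simp add: u1_def)
  have nu2: "norm u2 = 1" using n2 by (simp add: u2_def)
  have key: "(z1 - x) \<bullet> (z2 - x) / (norm (z1 - x) * norm (z2 - x)) = u1 \<bullet> u2"
    by (simp add: u1_def u2_def)
  have "2 * c \<le> - (a \<bullet> (u1 + u2))" using c1 c2 by (simp add: inner_add_right)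
  also have "\<dots> \<le> norm a * norm (u1 + u2)"
    using Cauchy_Schwarz_ineq2[of a "u1 + u2"] by linarith
  also have "\<dots> \<le> (1 + 2 * \<delta>) * norm (u1 + u2)" using na by (simp add: mult_right_mono)
  finally have "2 * s \<le> norm (u1 + u2)" using assms(4) by (simp add: s_def field_simps)
  moreover have "0 \<le> s" using cpos assms(4) by (simp add: s_def)
  ultimately have "(2 * s)\<^sup>2 \<le> (norm (u1 + u2))\<^sup>2" by (intro power_mono) auto
  also have "(norm (u1 + u2))\<^sup>2 = 2 + 2 * (u1 \<bullet> u2)"
    using nu1 nu2 dot_square_norm[of u1] dot_square_norm[of u2] by (simp add: power2_norm_eq_inner inner_add_left inner_add_right inner_commute power2_eq_square[symmetric] )
  finally have lo: "2 * s\<^sup>2 - 1 \<le> u1 \<bullet> u2" by (simp add: power_mult_distrib)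
  have hi: "\<bar>u1 \<bullet> u2\<bar> \<le> 1" using Cauchy_Schwarz_ineq2[of u1 u2] nu1 nu2 by simp
  have "arccos (u1 \<bullet> u2) \<le> arccos (2 * s\<^sup>2 - 1)"
    apply (rule arccos_le_arccos) using lo hi \<open>0 \<le> s\<close> by auto
  moreover have "0 \<le> arccos (u1 \<bullet> u2)" using hi by (intro arccos_lbound) auto
  ultimately show ?thesis unfolding vec_angle_def key s_def c_def by simp
qed

end
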